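(* Let $\mathcal{E}$ be a right exact category satisfying axiom R3. Suppose given a commutative diagram with rows $A\xrightarrow{\alpha}B\xrightarrow{\beta}C$, $X\to Y\to Z$, $A\xrightarrow{\alpha}B\xrightarrow{\beta}C$ and vertical morphisms $A\to X\to A$, $B\to Y\to B$, $C\to Z\to C$ whose composites are the identities of $A$, $B$, $C$ respectively. If $X\to Y\to Z$ is a conflation, then $A\xrightarrow{\alpha}B\xrightarrow{\beta}C$ is a conflation.
   Context: A conflation category is an additive category with a class of kernel-cokernel pairs (conflations; kernel part = inflation, cokernel part = deflation) closed under isomorphism. It is right exact if $1_0$ is a deflation, deflations compose, and pullbacks of deflations along arbitrary morphisms exist and are deflations. Axiom R3: if $i\colon A\to B$ and $p\colon B\to C$ are morphisms such that $p$ has a kernel and $p\circ i$ is a deflation, then $p$ is a deflation. *)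

theory Defs
  imports Main
begin

record ('o, 'm) addcat =
  Obj  :: "'o set"
  Arr  :: "'m set"
  Dom  :: "'m \<Rightarrow> 'o"
  Cod  :: "'m \<Rightarrow> 'o"
  Id   :: "'o \<Rightarrow> 'm"
  Comp :: "'m \<Rightarrow> 'm \<Rightarrow> 'm"   (* Comp g f = g \<circ> f, defined when Cod f = Dom g *)
  Add  :: "'m \<Rightarrow> 'm \<Rightarrow> 'm"
  Neg  :: "'m \<Rightarrow> 'm"
  Zero :: "'o \<Rightarrow> 'o \<Rightarrow> 'm"

definition hom :: "('o, 'm) addcat \<Rightarrow> 'o \<Rightarrow> 'o \<Rightarrow> 'm set" where
  "hom C a b = {f \<in> Arr C. Dom C f = a \<and> Cod C f = b}"

definition category :: "('o, 'm) addcat \<Rightarrow> bool" where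
  "category C \<longleftrightarrow>
     (\<forall>f \<in> Arr C. Dom C f \<in> Obj C \<and> Cod C f \<in> Obj C) \<and>
     (\<forall>a \<in> Obj C. Id C a \<in> hom C a a) \<and>
     (\<forall>a \<in> Obj C. \<forall>b \<in> Obj C. \<forall>c \<in> Obj C. \<forall>f \<in> hom C a b. \<forall>g \<in> hom C b c.
        Comp C g f \<in> hom C a c) \<and>
     (\<forall>a \<in> Obj C. \<forall>b \<in> Obj C. \<forall>f \<in> hom C a b.
        Comp C (Id C b) f = f \<and> Comp C f (Id C a) = f) \<and>
     (\<forall>a \<in> Obj C. \<forall>b \<in> Obj C. \<forall>c \<in> Obj C. \<forall>d \<in> Obj C.
        \<forall>f \<in> hom C a b. \<forall>g \<in> hom C b c. \<forall>h \<in> hom C c d.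
        Comp C h (Comp C g f) = Comp C (Comp C h g) f)"

definition preadditive :: "('o, 'm) addcat \<Rightarrow> bool" where
  "preadditive C \<longleftrightarrow> category C \<and>
     (\<forall>a \<in> Obj C. \<forall>b \<in> Obj C.
        Zero C a b \<in> hom C a b \<and>
        (\<forall>f \<in> hom C a b. Add C f (Zero C a b) = f \<and> Neg C f \<in> hom C a b \<and>
            Add C f (Neg C f) = Zero C a b) \<and>
        (\<forall>f \<in> hom C a b. \<forall>g \<in> hom C a b. Add C f g \<in> hom C a b \<and> Add C f g = Add C g f) \<and>
        (\<forall>f \<in> hom C a b. \<forall>g \<in> hom C a b. \<forall>h \<in> hom C a b.
            Add C (Add C f g) h = Add C f (Add C g h))) \<and>
     (\<forall>a \<in> Obj C. \<forall>b \<in> Obj C. \<forall>c \<in> Obj C.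
        \<forall>f \<in> hom C a b. \<forall>g \<in> hom C a b. \<forall>h \<in> hom C b c.
          Comp C h (Add C f g) = Add C (Comp C h f) (Comp C h g)) \<and>
     (\<forall>a \<in> Obj C. \<forall>b \<in> Obj C. \<forall>c \<in> Obj C.
        \<forall>k \<in> hom C a b. \<forall>f \<in> hom C b c. \<forall>g \<in> hom C b c.
          Comp C (Add C f g) k = Add C (Comp C f k) (Comp C g k))"

definition zero_object :: "('o, 'm) addcat \<Rightarrow> 'o \<Rightarrow> bool" where
  "zero_object C z \<longleftrightarrow> z \<in> Obj C \<and>
     (\<forall>a \<in> Obj C. (\<exists>!f. f \<in> hom C z a) \<and> (\<exists>!f. f \<in> hom C a z))"

definition is_biproduct ::
  "('o, 'm) addcat \<Rightarrow> 'o \<Rightarrow> 'o \<Rightarrow> 'o \<Rightarrow> 'm \<Rightarrow> 'm \<Rightarrow> 'm \<Rightarrow> 'm \<Rightarrow> bool" where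
  "is_biproduct C a b s i1 i2 p1 p2 \<longleftrightarrow> s \<in> Obj C \<and>
     i1 \<in> hom C a s \<and> i2 \<in> hom C b s \<and> p1 \<in> hom C s a \<and> p2 \<in> hom C s b \<and>
     Comp C p1 i1 = Id C a \<and> Comp C p2 i2 = Id C b \<and>
     Comp C p1 i2 = Zero C b a \<and> Comp C p2 i1 = Zero C a b \<and>
     Add C (Comp C i1 p1) (Comp C i2 p2) = Id C s"

definition additive :: "('o, 'm) addcat \<Rightarrow> bool" where
  "additive C \<longleftrightarrow> preadditive C \<and> (\<exists>z. zero_object C z) \<and>
     (\<forall>a \<in> Obj C. \<forall>b \<in> Obj C. \<exists>s i1 i2 p1 p2. is_biproduct C a b s i1 i2 p1 p2)"

definition is_kernel :: "('o, 'm) addcat \<Rightarrow> 'm \<Rightarrow> 'm \<Rightarrow> bool" where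
  "is_kernel C i p \<longleftrightarrow> i \<in> Arr C \<and> p \<in> Arr C \<and> Cod C i = Dom C p \<and>
     Comp C p i = Zero C (Dom C i) (Cod C p) \<and>
     (\<forall>t \<in> Obj C. \<forall>f \<in> hom C t (Dom C p).
        Comp C p f = Zero C t (Cod C p) \<longrightarrow> (\<exists>!g. g \<in> hom C t (Dom C i) \<and> Comp C i g = f))"

definition is_cokernel :: "('o, 'm) addcat \<Rightarrow> 'm \<Rightarrow> 'm \<Rightarrow> bool" where
  "is_cokernel C p i \<longleftrightarrow> i \<in> Arr C \<and> p \<in> Arr C \<and> Cod C i = Dom C p \<and>
     Comp C p i = Zero C (Dom C i) (Cod C p) \<and>
     (\<forall>t \<in> Obj C. \<forall>f \<in> hom C (Cod C i) t.
        Comp C f i = Zero C (Dom C i) t \<longrightarrow> (\<exists>!g. g \<in> hom C (Cod C p) t \<and> Comp C g p = f))"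

definition has_kernel :: "('o, 'm) addcat \<Rightarrow> 'm \<Rightarrow> bool" where
  "has_kernel C p \<longleftrightarrow> (\<exists>i. is_kernel C i p)"

definition kernel_cokernel_pair :: "('o, 'm) addcat \<Rightarrow> 'm \<Rightarrow> 'm \<Rightarrow> bool" where
  "kernel_cokernel_pair C i p \<longleftrightarrow> is_kernel C i p \<and> is_cokernel C p i"

definition iso :: "('o, 'm) addcat \<Rightarrow> 'm \<Rightarrow> bool" where
  "iso C f \<longleftrightarrow> f \<in> Arr C \<and> (\<exists>g \<in> hom C (Cod C f) (Dom C f).
     Comp C g f = Id C (Dom C f) \<and> Comp C f g = Id C (Cod C f))"

definition iso_pairs :: "('o, 'm) addcat \<Rightarrow> 'm \<Rightarrow> 'm \<Rightarrow> 'm \<Rightarrow> 'm \<Rightarrow> bool" where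
  "iso_pairs C i p i' p' \<longleftrightarrow> (\<exists>a b c.
     a \<in> hom C (Dom C i) (Dom C i') \<and> b \<in> hom C (Cod C i) (Cod C i') \<and>
     c \<in> hom C (Cod C p) (Cod C p') \<and> iso C a \<and> iso C b \<and> iso C c \<and>
     Comp C b i = Comp C i' a \<and> Comp C c p = Comp C p' b)"

definition is_pullback ::
  "('o, 'm) addcat \<Rightarrow> 'm \<Rightarrow> 'm \<Rightarrow> 'm \<Rightarrow> 'm \<Rightarrow> bool" where
  "is_pullback C p f p' f' \<longleftrightarrow> p \<in> Arr C \<and> f \<in> Arr C \<and> p' \<in> Arr C \<and> f' \<in> Arr C \<and>
     Cod C p = Cod C f \<and> Cod C p' = Dom C f \<and> Cod C f' = Dom C p \<and> Dom C p' = Dom C f' \<and>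
     Comp C p f' = Comp C f p' \<and>
     (\<forall>t \<in> Obj C. \<forall>g \<in> hom C t (Dom C f). \<forall>h \<in> hom C t (Dom C p).
        Comp C f g = Comp C p h \<longrightarrow>
        (\<exists>!u. u \<in> hom C t (Dom C p') \<and> Comp C p' u = g \<and> Comp C f' u = h))"

definition conflation_category :: "('o, 'm) addcat \<Rightarrow> ('m \<times> 'm) set \<Rightarrow> bool" where
  "conflation_category C Conf \<longleftrightarrow> additive C \<and>
     (\<forall>(i, p) \<in> Conf. kernel_cokernel_pair C i p) \<and>
     (\<forall>i p i' p'. (i, p) \<in> Conf \<and> kernel_cokernel_pair C i' p' \<and> iso_pairs C i p i' p'
        \<longrightarrow> (i', p') \<in> Conf)"

definition deflation :: "('m \<times> 'm) set \<Rightarrow> 'm \<Rightarrow> bool" where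
  "deflation Conf p \<longleftrightarrow> (\<exists>i. (i, p) \<in> Conf)"

definition inflation :: "('m \<times> 'm) set \<Rightarrow> 'm \<Rightarrow> bool" where
  "inflation Conf i \<longleftrightarrow> (\<exists>p. (i, p) \<in> Conf)"

definition right_exact :: "('o, 'm) addcat \<Rightarrow> ('m \<times> 'm) set \<Rightarrow> bool" where
  "right_exact C Conf \<longleftrightarrow> conflation_category C Conf \<and>
     (\<forall>z. zero_object C z \<longrightarrow> deflation Conf (Id C z)) \<and>
     (\<forall>p q. deflation Conf p \<and> deflation Conf q \<and> Cod C p = Dom C q
        \<longrightarrow> deflation Conf (Comp C q p)) \<and>
     (\<forall>p f. deflation Conf p \<and> f \<in> Arr C \<and> Cod C f = Cod C p \<longrightarrow>
        (\<exists>p' f'. is_pullback C p f p' f' \<and> deflation Conf p'))"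

definition axiom_R3 :: "('o, 'm) addcat \<Rightarrow> ('m \<times> 'm) set \<Rightarrow> bool" where
  "axiom_R3 C Conf \<longleftrightarrow>
     (\<forall>i p. i \<in> Arr C \<and> p \<in> Arr C \<and> Cod C i = Dom C p \<and> has_kernel C p \<and>
        deflation Conf (Comp C p i) \<longrightarrow> deflation Conf p)"

end

theory Submission
  imports Defs
begin

lemma pa_cat: "preadditive C \<Longrightarrow> category C" unfolding preadditive_def by simp
lemma pa_zero: "preadditive C \<Longrightarrow> a \<in> Obj C \<Longrightarrow> b \<in> Obj C \<Longrightarrow> Zero C a b \<in> hom C a b"
  unfolding preadditive_def by simp
lemma pa_addz: "preadditive C \<Longrightarrow> a \<in> Obj C \<Longrightarrow> b \<in> Obj C \<Longrightarrow> f \<in> hom C a b \<Longrightarrow> Add C f (Zero C a b) = f"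
  unfolding preadditive_def by simp
lemma pa_neg: "preadditive C \<Longrightarrow> a \<in> Obj C \<Longrightarrow> b \<in> Obj C \<Longrightarrow> f \<in> hom C a b \<Longrightarrow> Neg C f \<in> hom C a b \<and> Add C f (Neg C f) = Zero C a b"
  unfolding preadditive_def by simp
lemma pa_assoc: "preadditive C \<Longrightarrow> a \<in> Obj C \<Longrightarrow> b \<in> Obj C \<Longrightarrow> f \<in> hom C a b \<Longrightarrow> g \<in> hom C a b \<Longrightarrow> h \<in> hom C a b \<Longrightarrow> Add C (Add C f g) h = Add C f (Add C g h)"
  unfolding preadditive_def by blast
lemma pa_distl: "preadditive C \<Longrightarrow> a \<in> Obj C \<Longrightarrow> b \<in> Obj C \<Longrightarrow> c \<in> Obj C \<Longrightarrow> f \<in> hom C a b \<Longrightarrow> g \<in> hom C a b \<Longrightarrow> h \<in> hom C b c \<Longrightarrow>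
  Comp C h (Add C f g) = Add C (Comp C h f) (Comp C h g)"
  unfolding preadditive_def by simp
lemma pa_distr: "preadditive C \<Longrightarrow> a \<in> Obj C \<Longrightarrow> b \<in> Obj C \<Longrightarrow> c \<in> Obj C \<Longrightarrow> k \<in> hom C a b \<Longrightarrow> f \<in> hom C b c \<Longrightarrow> g \<in> hom C b c \<Longrightarrow>
  Comp C (Add C f g) k = Add C (Comp C f k) (Comp C g k)"
  unfolding preadditive_def by simp
lemma hom_obj: "category C \<Longrightarrow> f \<in> hom C a b \<Longrightarrow> a \<in> Obj C \<and> b \<in> Obj C"
  unfolding category_def hom_def by auto
lemma comp_hom: "category C \<Longrightarrow> f \<in> hom C a b \<Longrightarrow> g \<in> hom C b c \<Longrightarrow> Comp C g f \<in> hom C a c"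
  using hom_obj[of C f a b] hom_obj[of C g b c] unfolding category_def by blast
lemma id_hom: "category C \<Longrightarrow> a \<in> Obj C \<Longrightarrow> Id C a \<in> hom C a a"
  unfolding category_def by blast
lemma id_l: "category C \<Longrightarrow> f \<in> hom C a b \<Longrightarrow> Comp C (Id C b) f = f"
  using hom_obj[of C f a b] unfolding category_def by blast
lemma id_r: "category C \<Longrightarrow> f \<in> hom C a b \<Longrightarrow> Comp C f (Id C a) = f"
  using hom_obj[of C f a b] unfolding category_def by blast
lemma assoc: "category C \<Longrightarrow> f \<in> hom C a b \<Longrightarrow> g \<in> hom C b c \<Longrightarrow> h \<in> hom C c d \<Longrightarrow>
   Comp C h (Comp C g f) = Comp C (Comp C h g) f"
  using hom_obj[of C f a b] hom_obj[of C g b c] hom_obj[of C h c d] unfolding category_def by blast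
lemma hom_simp: "f \<in> hom C a b \<longleftrightarrow> f \<in> Arr C \<and> Dom C f = a \<and> Cod C f = b"
  by (simp add: hom_def)

lemma group_zero: assumes "preadditive C" "a \<in> Obj C" "b \<in> Obj C" "w \<in> hom C a b"
  "w = Add C w w" shows "w = Zero C a b"
proof -
  have n: "Neg C w \<in> hom C a b" "Add C w (Neg C w) = Zero C a b" "Add C w (Zero C a b) = w"
    using pa_neg[OF assms(1-4)] pa_addz[OF assms(1-4)] by auto
  have "Add C (Add C w w) (Neg C w) = Add C w (Add C w (Neg C w))"
    using pa_assoc[OF assms(1-4) assms(4) n(1)] .
  then have "Add C w (Neg C w) = Add C w (Add C w (Neg C w))" using assms(5) by metis
  then show ?thesis using n by metis
qed

lemma comp_zero_r: assumes "preadditive C" "h \<in> hom C b c" "a \<in> Obj C"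
  shows "Comp C h (Zero C a b) = Zero C a c"
proof -
  have cat: "category C" using assms(1) pa_cat by blast
  have ob: "b \<in> Obj C" "c \<in> Obj C" using hom_obj[OF cat assms(2)] by auto
  have z: "Zero C a b \<in> hom C a b" using pa_zero[OF assms(1,3) ob(1)] .
  have zz: "Add C (Zero C a b) (Zero C a b) = Zero C a b" using pa_addz[OF assms(1,3) ob(1) z] .
  have d: "Comp C h (Add C (Zero C a b) (Zero C a b)) = Add C (Comp C h (Zero C a b)) (Comp C h (Zero C a b))"
    using pa_distl[OF assms(1,3) ob(1,2) z z assms(2)] .
  have w: "Comp C h (Zero C a b) = Add C (Comp C h (Zero C a b)) (Comp C h (Zero C a b))"
    using d unfolding zz .
  show ?thesis using group_zero[OF assms(1,3) ob(2) comp_hom[OF cat z assms(2)] w] .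
qed

lemma comp_zero_l: assumes "preadditive C" "k \<in> hom C a b" "c \<in> Obj C"
  shows "Comp C (Zero C b c) k = Zero C a c"
proof -
  have cat: "category C" using assms(1) pa_cat by blast
  have ob: "a \<in> Obj C" "b \<in> Obj C" using hom_obj[OF cat assms(2)] by auto
  have z: "Zero C b c \<in> hom C b c" using pa_zero[OF assms(1) ob(2) assms(3)] .
  have zz: "Add C (Zero C b c) (Zero C b c) = Zero C b c" using pa_addz[OF assms(1) ob(2) assms(3) z] .
  have d: "Comp C (Add C (Zero C b c) (Zero C b c)) k = Add C (Comp C (Zero C b c) k) (Comp C (Zero C b c) k)"
    using pa_distr[OF assms(1) ob assms(3) assms(2) z z] .
  have w: "Comp C (Zero C b c) k = Add C (Comp C (Zero C b c) k) (Comp C (Zero C b c) k)"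
    using d unfolding zz .
  show ?thesis using group_zero[OF assms(1) ob(1) assms(3) comp_hom[OF cat assms(2) z] w] .
qed

lemma retract_zero:
  assumes pa: "preadditive C"
    and h: "\<alpha> \<in> hom C A B" "\<beta> \<in> hom C B Ca" "\<xi> \<in> hom C X Y" "\<eta> \<in> hom C Y Z"
    "a1 \<in> hom C A X" "b1 \<in> hom C B Y" "c1 \<in> hom C Ca Z" "c2 \<in> hom C Z Ca"
    and e: "Comp C c2 c1 = Id C Ca" "Comp C \<xi> a1 = Comp C b1 \<alpha>" "Comp C \<eta> b1 = Comp C c1 \<beta>"
    and z: "Comp C \<eta> \<xi> = Zero C X Z"
  shows "Comp C \<beta> \<alpha> = Zero C A Ca"
proof -
  have cat: "category C" using pa pa_cat by blast
  have ob: "A \<in> Obj C" "Ca \<in> Obj C" "Z \<in> Obj C" using h hom_obj[OF cat] by blast+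
  have "Comp C c1 (Comp C \<beta> \<alpha>) = Comp C (Comp C c1 \<beta>) \<alpha>" using assoc[OF cat h(1,2,7)] .
  also have "\<dots> = Comp C (Comp C \<eta> b1) \<alpha>" using e by simp
  also have "\<dots> = Comp C \<eta> (Comp C b1 \<alpha>)" using assoc[OF cat h(1,6,4)] by simp
  also have "\<dots> = Comp C \<eta> (Comp C \<xi> a1)" using e by simp
  also have "\<dots> = Comp C (Comp C \<eta> \<xi>) a1" using assoc[OF cat h(5,3,4)] by simp
  also have "\<dots> = Zero C A Z" using z comp_zero_l[OF pa h(5) ob(3)] by simp
  finally have 1: "Comp C c1 (Comp C \<beta> \<alpha>) = Zero C A Z" .
  have ba: "Comp C \<beta> \<alpha> \<in> hom C A Ca" using comp_hom[OF cat h(1,2)] .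
  have "Comp C \<beta> \<alpha> = Comp C (Comp C c2 c1) (Comp C \<beta> \<alpha>)" using e id_l[OF cat ba] by simp
  also have "\<dots> = Comp C c2 (Comp C c1 (Comp C \<beta> \<alpha>))" using assoc[OF cat ba h(7,8)] by simp
  also have "\<dots> = Zero C A Ca" using 1 comp_zero_r[OF pa h(8) ob(1)] by simp
  finally show ?thesis .
qed

lemma retract_kernel:
  assumes pa: "preadditive C"
    and h: "\<alpha> \<in> hom C A B" "\<beta> \<in> hom C B Ca" "\<xi> \<in> hom C X Y" "\<eta> \<in> hom C Y Z"
    "a1 \<in> hom C A X" "a2 \<in> hom C X A" "b1 \<in> hom C B Y" "b2 \<in> hom C Y B"
    "c1 \<in> hom C Ca Z" "c2 \<in> hom C Z Ca"
    and e: "Comp C a2 a1 = Id C A" "Comp C b2 b1 = Id C B" "Comp C c2 c1 = Id C Ca"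
    "Comp C \<xi> a1 = Comp C b1 \<alpha>" "Comp C \<eta> b1 = Comp C c1 \<beta>"
    "Comp C \<alpha> a2 = Comp C b2 \<xi>" 
    and kx: "is_kernel C \<xi> \<eta>"
  shows "is_kernel C \<alpha> \<beta>"
proof -
  have cat: "category C" using pa pa_cat by blast
  have ob: "A \<in> Obj C" "Ca \<in> Obj C" "Z \<in> Obj C" using h hom_obj[OF cat] by blast+
  have dd: "Dom C \<eta> = Y" "Cod C \<eta> = Z" "Dom C \<xi> = X" "Dom C \<alpha> = A" "Cod C \<beta> = Ca" "Dom C \<beta> = B"
    "Cod C \<alpha> = B" "\<alpha> \<in> Arr C" "\<beta> \<in> Arr C"
    using h by (auto simp: hom_def)
  have z: "Comp C \<eta> \<xi> = Zero C X Z" using kx dd unfolding is_kernel_def by simp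
  have ku: "\<And>t f. t \<in> Obj C \<Longrightarrow> f \<in> hom C t Y \<Longrightarrow> Comp C \<eta> f = Zero C t Z \<Longrightarrow> (\<exists>!g. g \<in> hom C t X \<and> Comp C \<xi> g = f)"
    using kx dd unfolding is_kernel_def by simp
  have ba: "Comp C \<beta> \<alpha> = Zero C A Ca"
    using retract_zero[OF pa h(1-4,5,7,9,10) e(3,4,5) z] .
  show ?thesis unfolding is_kernel_def dd
  proof (intro conjI ballI impI)
    show "\<alpha> \<in> Arr C" "\<beta> \<in> Arr C" "B = B" "Comp C \<beta> \<alpha> = Zero C A Ca" using dd ba by auto
    fix t f assume t: "t \<in> Obj C" and f: "f \<in> hom C t B" and bf: "Comp C \<beta> f = Zero C t Ca"
    have "Comp C \<eta> (Comp C b1 f) = Comp C (Comp C \<eta> b1) f" using assoc[OF cat f h(7,4)] .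
    also have "\<dots> = Comp C (Comp C c1 \<beta>) f" using e by simp
    also have "\<dots> = Comp C c1 (Comp C \<beta> f)" using assoc[OF cat f h(2,9)] by simp
    also have "\<dots> = Zero C t Z" using bf comp_zero_r[OF pa h(9) t] by simp
    finally have "Comp C \<eta> (Comp C b1 f) = Zero C t Z" .
    from ku[OF t comp_hom[OF cat f h(7)] this] obtain g' where
      g': "g' \<in> hom C t X" "Comp C \<xi> g' = Comp C b1 f"
      and gu: "\<And>g. g \<in> hom C t X \<Longrightarrow> Comp C \<xi> g = Comp C b1 f \<Longrightarrow> g = g'" by blast
    show "\<exists>!g. g \<in> hom C t A \<and> Comp C \<alpha> g = f"
    proof (rule ex1I[of _ "Comp C a2 g'"])
      have "Comp C \<alpha> (Comp C a2 g') = Comp C (Comp C \<alpha> a2) g'" using assoc[OF cat g'(1) h(6,1)] .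
      also have "\<dots> = Comp C (Comp C b2 \<xi>) g'" using e by simp
      also have "\<dots> = Comp C b2 (Comp C b1 f)" using assoc[OF cat g'(1) h(3,8)] g' by simp
      also have "\<dots> = f" using assoc[OF cat f h(7,8)] e id_l[OF cat f] by simp
      finally show "Comp C a2 g' \<in> hom C t A \<and> Comp C \<alpha> (Comp C a2 g') = f"
        using comp_hom[OF cat g'(1) h(6)] by simp
    next
      fix g assume g: "g \<in> hom C t A \<and> Comp C \<alpha> g = f"
      have "Comp C \<xi> (Comp C a1 g) = Comp C (Comp C \<xi> a1) g" using assoc[OF cat _ h(5,3)] g by blast
      also have "\<dots> = Comp C (Comp C b1 \<alpha>) g" using e by simp
      also have "\<dots> = Comp C b1 f" using assoc[OF cat _ h(1,7)] g by metis
      finally have "Comp C a1 g = g'" using gu comp_hom[OF cat _ h(5)] g by blast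
      then have "Comp C a2 (Comp C a1 g) = Comp C a2 g'" by simp
      then show "g = Comp C a2 g'" using assoc[OF cat _ h(5,6)] g e id_l[OF cat] by metis
    qed
  qed
qed

lemma retract_cokernel:
  assumes pa: "preadditive C"
    and h: "\<alpha> \<in> hom C A B" "\<beta> \<in> hom C B Ca" "\<xi> \<in> hom C X Y" "\<eta> \<in> hom C Y Z"
    "a1 \<in> hom C A X" "a2 \<in> hom C X A" "b1 \<in> hom C B Y" "b2 \<in> hom C Y B"
    "c1 \<in> hom C Ca Z" "c2 \<in> hom C Z Ca"
    and e: "Comp C a2 a1 = Id C A" "Comp C b2 b1 = Id C B" "Comp C c2 c1 = Id C Ca"
    "Comp C \<xi> a1 = Comp C b1 \<alpha>" "Comp C \<eta> b1 = Comp C c1 \<beta>"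
    "Comp C \<alpha> a2 = Comp C b2 \<xi>" "Comp C \<beta> b2 = Comp C c2 \<eta>"
    and kx: "is_cokernel C \<eta> \<xi>"
  shows "is_cokernel C \<beta> \<alpha>"
proof -
  have cat: "category C" using pa pa_cat by blast
  have ob: "A \<in> Obj C" "Ca \<in> Obj C" "Z \<in> Obj C" using h hom_obj[OF cat] by blast+
  have dd: "Dom C \<eta> = Y" "Cod C \<eta> = Z" "Dom C \<xi> = X" "Cod C \<xi> = Y" "Dom C \<alpha> = A" "Cod C \<beta> = Ca" "Dom C \<beta> = B"
    "Cod C \<alpha> = B" "\<alpha> \<in> Arr C" "\<beta> \<in> Arr C"
    using h by (auto simp: hom_def)
  have z: "Comp C \<eta> \<xi> = Zero C X Z" using kx dd unfolding is_cokernel_def by simp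
  have ku: "\<And>t f. t \<in> Obj C \<Longrightarrow> f \<in> hom C Y t \<Longrightarrow> Comp C f \<xi> = Zero C X t \<Longrightarrow> (\<exists>!g. g \<in> hom C Z t \<and> Comp C g \<eta> = f)"
    using kx dd unfolding is_cokernel_def by simp
  have ba: "Comp C \<beta> \<alpha> = Zero C A Ca"
    using retract_zero[OF pa h(1-4,5,7,9,10) e(3,4,5) z] .
  show ?thesis unfolding is_cokernel_def dd
  proof (intro conjI ballI impI)
    show "\<alpha> \<in> Arr C" "\<beta> \<in> Arr C" "B = B" "Comp C \<beta> \<alpha> = Zero C A Ca" using dd ba by auto
    fix t f assume t: "t \<in> Obj C" and f: "f \<in> hom C B t" and bf: "Comp C f \<alpha> = Zero C A t"
    have "Comp C (Comp C f b2) \<xi> = Comp C f (Comp C b2 \<xi>)" using assoc[OF cat h(3,8) f] by simp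
    also have "\<dots> = Comp C f (Comp C \<alpha> a2)" using e by simp
    also have "\<dots> = Comp C (Comp C f \<alpha>) a2" using assoc[OF cat h(6,1) f] by simp
    also have "\<dots> = Zero C X t" using bf comp_zero_l[OF pa h(6) t] by simp
    finally have "Comp C (Comp C f b2) \<xi> = Zero C X t" .
    from ku[OF t comp_hom[OF cat h(8) f] this] obtain g' where
      g': "g' \<in> hom C Z t" "Comp C g' \<eta> = Comp C f b2"
      and gu: "\<And>g. g \<in> hom C Z t \<Longrightarrow> Comp C g \<eta> = Comp C f b2 \<Longrightarrow> g = g'" by blast
    show "\<exists>!g. g \<in> hom C Ca t \<and> Comp C g \<beta> = f"
    proof (rule ex1I[of _ "Comp C g' c1"])
      have "Comp C (Comp C g' c1) \<beta> = Comp C g' (Comp C c1 \<beta>)" using assoc[OF cat h(2,9) g'(1)] by simp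
      also have "\<dots> = Comp C g' (Comp C \<eta> b1)" using e by simp
      also have "\<dots> = Comp C (Comp C f b2) b1" using assoc[OF cat h(7,4) g'(1)] g' by simp
      also have "\<dots> = f" using assoc[OF cat h(7,8) f] e id_r[OF cat f] by simp
      finally show "Comp C g' c1 \<in> hom C Ca t \<and> Comp C (Comp C g' c1) \<beta> = f"
        using comp_hom[OF cat h(9) g'(1)] by simp
    next
      fix g assume g: "g \<in> hom C Ca t \<and> Comp C g \<beta> = f"
      have "Comp C (Comp C g c2) \<eta> = Comp C g (Comp C c2 \<eta>)" using assoc[OF cat h(4,10)] g by metis
      also have "\<dots> = Comp C g (Comp C \<beta> b2)" using e by simp
      also have "\<dots> = Comp C f b2" using assoc[OF cat h(8,2)] g by metis
      finally have "Comp C g c2 = g'" using gu comp_hom[OF cat h(10)] g by blast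
      then have "Comp C (Comp C g c2) c1 = Comp C g' c1" by simp
      then show "g = Comp C g' c1" using assoc[OF cat h(9,10)] g e id_r[OF cat] by metis
    qed
  qed
qed

lemma kernel_iso:
  assumes pa: "preadditive C" and ki: "is_kernel C i \<beta>" and ka: "is_kernel C \<alpha> \<beta>"
    and ha: "\<alpha> \<in> hom C A B" and hi: "i \<in> hom C D B" and hb: "\<beta> \<in> hom C B Ca"
  shows "\<exists>a \<in> hom C D A. iso C a \<and> i = Comp C \<alpha> a"
proof -
  have cat: "category C" using pa pa_cat by blast
  have ob: "A \<in> Obj C" "D \<in> Obj C" using ha hi hom_obj[OF cat] by blast+
  have dd: "Dom C \<alpha> = A" "Dom C i = D" "Dom C \<beta> = B" "Cod C \<beta> = Ca" using ha hi hb by (auto simp: hom_def)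
  have ua: "\<And>t f. t \<in> Obj C \<Longrightarrow> f \<in> hom C t B \<Longrightarrow> Comp C \<beta> f = Zero C t Ca \<Longrightarrow> (\<exists>!g. g \<in> hom C t A \<and> Comp C \<alpha> g = f)"
    using ka dd unfolding is_kernel_def by simp
  have ui: "\<And>t f. t \<in> Obj C \<Longrightarrow> f \<in> hom C t B \<Longrightarrow> Comp C \<beta> f = Zero C t Ca \<Longrightarrow> (\<exists>!g. g \<in> hom C t D \<and> Comp C i g = f)"
    using ki dd unfolding is_kernel_def by simp
  have za: "Comp C \<beta> \<alpha> = Zero C A Ca" using ka dd unfolding is_kernel_def by simp
  have zi: "Comp C \<beta> i = Zero C D Ca" using ki dd unfolding is_kernel_def by simp
  obtain a where a: "a \<in> hom C D A" "Comp C \<alpha> a = i" using ua[OF ob(2) hi zi] by blast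
  obtain a' where a': "a' \<in> hom C A D" "Comp C i a' = \<alpha>" using ui[OF ob(1) ha za] by blast
  have aa': "Comp C a a' \<in> hom C A A" using comp_hom[OF cat a'(1) a(1)] .
  have a'a: "Comp C a' a \<in> hom C D D" using comp_hom[OF cat a(1) a'(1)] .
  have e1: "Comp C \<alpha> (Comp C a a') = \<alpha>" using assoc[OF cat a'(1) a(1) ha] a a' by simp
  have e2: "Comp C \<alpha> (Id C A) = \<alpha>" using id_r[OF cat ha] .
  have "Comp C a a' = Id C A" using ua[OF ob(1) ha za] e1 e2 aa' id_hom[OF cat ob(1)] by blast
  moreover
  have e3: "Comp C i (Comp C a' a) = i" using assoc[OF cat a(1) a'(1) hi] a a' by simp
  have e4: "Comp C i (Id C D) = i" using id_r[OF cat hi] .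
  have "Comp C a' a = Id C D" using ui[OF ob(2) hi zi] e3 e4 a'a id_hom[OF cat ob(2)] by blast
  ultimately have "iso C a" using a(1) a'(1) unfolding iso_def hom_def by auto
  then show ?thesis using a by auto
qed

lemma id_iso: "category C \<Longrightarrow> a \<in> Obj C \<Longrightarrow> iso C (Id C a)"
  using id_hom[of C a] id_l[of C "Id C a" a a] unfolding iso_def hom_def by auto

theorem proposition2p6:
  fixes C :: "('o, 'm) addcat" and Conf :: "('m \<times> 'm) set"
  assumes "right_exact C Conf" and "axiom_R3 C Conf"
    and "A \<in> Obj C" "B \<in> Obj C" "Ca \<in> Obj C" "X \<in> Obj C" "Y \<in> Obj C" "Z \<in> Obj C"
    and "\<alpha> \<in> hom C A B" "\<beta> \<in> hom C B Ca" "\<xi> \<in> hom C X Y" "\<eta> \<in> hom C Y Z"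
    and "a1 \<in> hom C A X" "a2 \<in> hom C X A"
    and "b1 \<in> hom C B Y" "b2 \<in> hom C Y B"
    and "c1 \<in> hom C Ca Z" "c2 \<in> hom C Z Ca"
    and "Comp C a2 a1 = Id C A" "Comp C b2 b1 = Id C B" "Comp C c2 c1 = Id C Ca"
    and "Comp C \<xi> a1 = Comp C b1 \<alpha>" "Comp C \<eta> b1 = Comp C c1 \<beta>"
    and "Comp C \<alpha> a2 = Comp C b2 \<xi>" "Comp C \<beta> b2 = Comp C c2 \<eta>"
    and "(\<xi>, \<eta>) \<in> Conf"
  shows "(\<alpha>, \<beta>) \<in> Conf"
proof -
  note h = assms(9-18)
  note e = assms(19-25)
  have cc: "conflation_category C Conf" using assms(1) unfolding right_exact_def by blast
  have pa: "preadditive C" using cc unfolding conflation_category_def additive_def by blast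
  have cat: "category C" using pa pa_cat by blast
  have kcx: "kernel_cokernel_pair C \<xi> \<eta>" using cc assms(26) unfolding conflation_category_def by blast
  have kx: "is_kernel C \<xi> \<eta>" and cx: "is_cokernel C \<eta> \<xi>" using kcx unfolding kernel_cokernel_pair_def by auto
  have ka: "is_kernel C \<alpha> \<beta>" using retract_kernel[OF pa h e(1-6) kx] .
  have ca: "is_cokernel C \<beta> \<alpha>" using retract_cokernel[OF pa h e cx] .
  have pb: "\<And>p f. deflation Conf p \<Longrightarrow> f \<in> Arr C \<Longrightarrow> Cod C f = Cod C p \<Longrightarrow>
        (\<exists>p' f'. is_pullback C p f p' f' \<and> deflation Conf p')"
    using assms(1) unfolding right_exact_def by blast
  have r3: "\<And>i p. i \<in> Arr C \<Longrightarrow> p \<in> Arr C \<Longrightarrow> Cod C i = Dom C p \<Longrightarrow> has_kernel C p \<Longrightarrow>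
        deflation Conf (Comp C p i) \<Longrightarrow> deflation Conf p"
    using assms(2) unfolding axiom_R3_def by blast
  have "deflation Conf \<eta>" using assms(26) unfolding deflation_def by blast
  moreover have "c1 \<in> Arr C" "Cod C c1 = Cod C \<eta>" using h by (auto simp: hom_def)
  ultimately obtain p' f' where pbk: "is_pullback C \<eta> c1 p' f'" and dp: "deflation Conf p'"
    using pb by blast
  define P where "P = Dom C p'"
  have hp: "p' \<in> hom C P Ca" and hf: "f' \<in> hom C P Y" and sq: "Comp C \<eta> f' = Comp C c1 p'"
    using pbk h unfolding is_pullback_def P_def hom_def by auto
  have i0: "Comp C b2 f' \<in> hom C P B" using comp_hom[OF cat hf h(8)] .
  have "Comp C \<beta> (Comp C b2 f') = Comp C (Comp C \<beta> b2) f'" using assoc[OF cat hf h(8,2)] .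
  also have "\<dots> = Comp C (Comp C c2 \<eta>) f'" using e by simp
  also have "\<dots> = Comp C c2 (Comp C c1 p')" using assoc[OF cat hf h(4,10)] sq by simp
  also have "\<dots> = p'" using assoc[OF cat hp h(9,10)] e id_l[OF cat hp] by simp
  finally have "Comp C \<beta> (Comp C b2 f') = p'" .
  then have "deflation Conf \<beta>"
    using r3[of "Comp C b2 f'" \<beta>] dp i0 h(2) ka unfolding has_kernel_def hom_def by auto
  then obtain i where ib: "(i, \<beta>) \<in> Conf" unfolding deflation_def by blast
  have ki: "is_kernel C i \<beta>" using cc ib unfolding conflation_category_def kernel_cokernel_pair_def by blast
  define D where "D = Dom C i"
  have hi: "i \<in> hom C D B" using ki h(2) unfolding is_kernel_def D_def hom_def by auto
  obtain a where a: "a \<in> hom C D A" "iso C a" "i = Comp C \<alpha> a"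
    using kernel_iso[OF pa ki ka h(1) hi h(2)] by blast
  have ip: "iso_pairs C i \<beta> \<alpha> \<beta>"
    unfolding iso_pairs_def
  proof (intro exI conjI)
    show "a \<in> hom C (Dom C i) (Dom C \<alpha>)" using a hi h by (auto simp: hom_def)
    show "Id C B \<in> hom C (Cod C i) (Cod C \<alpha>)" using id_hom[OF cat assms(4)] hi h by (auto simp: hom_def)
    show "Id C Ca \<in> hom C (Cod C \<beta>) (Cod C \<beta>)" using id_hom[OF cat assms(5)] h by (auto simp: hom_def)
    show "iso C a" by (rule a(2))
    show "iso C (Id C B)" using id_iso[OF cat assms(4)] .
    show "iso C (Id C Ca)" using id_iso[OF cat assms(5)] .
    show "Comp C (Id C B) i = Comp C \<alpha> a" using id_l[OF cat hi] a by simp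
    show "Comp C (Id C Ca) \<beta> = Comp C \<beta> (Id C B)" using id_l[OF cat h(2)] id_r[OF cat h(2)] by simp
  qed
  have "kernel_cokernel_pair C \<alpha> \<beta>" using ka ca unfolding kernel_cokernel_pair_def by blast
  then show ?thesis using cc ib ip unfolding conflation_category_def by blast
qed

end
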